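(* For every positive integer $n$, every real $t\in[0,n)$ and every $p\in[0,1]$, if $B\sim\mathrm{Binom}(n,p)$ then \[ \mathbb{E}\Big[\exp\Big(t\cdot D\big((B/n,1-B/n)\,\|\,(p,1-p)\big)\Big)\Big]\leq\frac{1}{1-t/n}. \]
   Context: $D\big((q,1-q)\,\|\,(p,1-p)\big)=q\log\frac{q}{p}+(1-q)\log\frac{1-q}{1-p}$ is the Kullback--Leibler divergence between Bernoulli distributions (natural logarithm, convention $0\log(0/p)=0$). *)

theory Defs
  imports "HOL-Probability.Probability"
begin

definition xlogxy :: "real \<Rightarrow> real \<Rightarrow> real" where
  "xlogxy q p = (if q = 0 then 0 else q * ln (q / p))"

definition kl_bern :: "real \<Rightarrow> real \<Rightarrow> real" where
  "kl_bern q p = xlogxy q p + xlogxy (1 - q) (1 - p)"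

end

theory Submission
  imports Defs
begin

lemma fd_step:
  fixes f :: "nat \<Rightarrow> real"
  shows "(\<Sum>k\<le>Suc m. real (Suc m choose k) * (-1)^k * f k) =
         - (\<Sum>k\<le>m. real (m choose k) * (-1)^k * (f (Suc k) - f k))"
proof -
  have A0: "(\<Sum>k\<le>Suc m. real (Suc m choose k) * (-1)^k * f k) =
     f 0 + (\<Sum>k\<le>m. (real (m choose k) * (-1)^(Suc k) * f (Suc k)
         + real (m choose Suc k) * (-1)^(Suc k) * f (Suc k)))"
    by (subst sum.atMost_Suc_shift) (simp add: algebra_simps)
  have A: "(\<Sum>k\<le>Suc m. real (Suc m choose k) * (-1)^k * f k) =
     f 0 + (\<Sum>k\<le>m. real (m choose k) * (-1)^(Suc k) * f (Suc k))
         + (\<Sum>k\<le>m. real (m choose Suc k) * (-1)^(Suc k) * f (Suc k))"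
    unfolding A0 sum.distrib by simp
  have B: "(\<Sum>k\<le>Suc m. real (m choose k) * (-1)^k * f k) =
     f 0 + (\<Sum>k\<le>m. real (m choose Suc k) * (-1)^(Suc k) * f (Suc k))"
    by (subst sum.atMost_Suc_shift) simp
  have C: "(\<Sum>k\<le>Suc m. real (m choose k) * (-1)^k * f k) = (\<Sum>k\<le>m. real (m choose k) * (-1)^k * f k)"
    by simp
  have E: "(\<Sum>k\<le>m. real (m choose k) * (-1)^(Suc k) * f (Suc k)) = - (\<Sum>k\<le>m. real (m choose k) * (-1)^k * f (Suc k))"
    by (simp add: sum_negf[symmetric])
  have F: "(\<Sum>k\<le>m. real (m choose k) * (-1)^k * (f (Suc k) - f k)) =
     (\<Sum>k\<le>m. real (m choose k) * (-1)^k * f (Suc k)) - (\<Sum>k\<le>m. real (m choose k) * (-1)^k * f k)"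
    by (simp add: sum_subtractf[symmetric] algebra_simps)
  show ?thesis using A B C E F by linarith
qed

lemma fd_pow:
  fixes x z :: real
  shows "j \<le> m \<Longrightarrow> (\<Sum>k\<le>m. real (m choose k) * (-1)^k * (x + real k * z)^j) =
           (if j = m then (-1)^m * fact m * z^m else 0)"
proof (induction m arbitrary: j)
  case 0
  then show ?case by simp
next
  case (Suc m)
  have D: "(x + real (Suc k) * z)^j - (x + real k * z)^j =
       (\<Sum>i<j. real (j choose i) * z^(j-i) * (x + real k * z)^i)" for k
  proof -
    have "(x + real (Suc k) * z)^j = ((x + real k * z) + z)^j" by (simp add: algebra_simps)
    also have "\<dots> = (\<Sum>i\<le>j. real (j choose i) * (x + real k * z)^i * z^(j-i))"
      by (rule binomial_ring)
    also have "\<dots> = (\<Sum>i<j. real (j choose i) * z^(j-i) * (x + real k * z)^i) + (x + real k * z)^j"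
      by (simp add: lessThan_Suc_atMost[symmetric] algebra_simps)
    finally show ?thesis by simp
  qed
  have "(\<Sum>k\<le>Suc m. real (Suc m choose k) * (-1)^k * (x + real k * z)^j)
      = - (\<Sum>k\<le>m. real (m choose k) * (-1)^k * (\<Sum>i<j. real (j choose i) * z^(j-i) * (x + real k * z)^i))"
    by (simp only: fd_step D)
  also have "\<dots> = - (\<Sum>i<j. real (j choose i) * z^(j-i) * (\<Sum>k\<le>m. real (m choose k) * (-1)^k * (x + real k * z)^i))"
    by (simp add: sum_distrib_left sum_distrib_right algebra_simps sum.swap[of _ "{..<j}"])
  also have "\<dots> = - (\<Sum>i<j. real (j choose i) * z^(j-i) * (if i = m then (-1)^m * fact m * z^m else 0))"
    using Suc by (intro arg_cong[where f=uminus] sum.cong) auto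
  also have "\<dots> = (if j = Suc m then (-1)^(Suc m) * fact (Suc m) * z^(Suc m) else 0)"
  proof (cases "j = Suc m")
    case True
    have Z: "(\<Sum>i<m. real (j choose i) * z^(j-i) * (if i = m then (-1)^m * fact m * z^m else 0)) = 0"
      by (intro sum.neutral) auto
    have "(\<Sum>i<j. real (j choose i) * z^(j-i) * (if i = m then (-1)^m * fact m * z^m else 0))
        = real (j choose m) * z^(j-m) * ((-1)^m * fact m * z^m)"
      using True Z by (simp add: lessThan_Suc)
    then show ?thesis using True by (simp add: algebra_simps)
  next
    case False
    then have "j \<le> m" using Suc.prems by simp
    then show ?thesis using False by (auto intro!: sum.neutral)
  qed
  finally show ?case .
qed

lemma neg1_diff: "k \<le> m \<Longrightarrow> (-1::real)^(m-k) = (-1)^m * (-1)^k"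
proof -
  assume "k \<le> m"
  then have "(-1::real)^m = (-1)^(m-k) * (-1)^k" by (simp flip: power_add)
  then have "(-1::real)^m * (-1)^k = (-1)^(m-k) * ((-1)^k * (-1)^k)" by simp
  also have "(-1::real)^k * (-1)^k = 1" by (simp flip: power_add)
  finally show ?thesis by simp
qed

lemma abel_sum:
  fixes x z u :: real
  shows "(\<Sum>k\<le>n. real (n choose k) * (x + real k * z)^k * (u - (x + real k * z))^(n-k))
       = (\<Sum>m\<le>n. real (n choose m) * fact m * z^m * u^(n-m))"
proof -
  define G where "G k i = real (n choose k) * real ((n-k) choose i) * (-1)^i * (x + real k * z)^(k+i) * u^(n-k-i)" for k i
  have 1: "real (n choose k) * (x + real k * z)^k * (u - (x + real k * z))^(n-k) = (\<Sum>i\<le>n-k. G k i)" for k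
  proof -
    have "(u - (x + real k * z))^(n-k) = (-(x + real k * z) + u)^(n-k)" by (simp add: algebra_simps)
    also have "\<dots> = (\<Sum>i\<le>n-k. real ((n-k) choose i) * (-(x + real k * z))^i * u^(n-k-i))"
      by (rule binomial_ring)
    finally have e: "(u - (x + real k * z))^(n-k) = (\<Sum>i\<le>n-k. real ((n-k) choose i) * (-(x + real k * z))^i * u^(n-k-i))" .
    show ?thesis unfolding e sum_distrib_left G_def
    proof (intro sum.cong refl)
      fix i
      show "real (n choose k) * (x + real k * z)^k * (real ((n-k) choose i) * (-(x + real k * z))^i * u^(n-k-i))
          = real (n choose k) * real ((n-k) choose i) * (-1)^i * (x + real k * z)^(k+i) * u^(n-k-i)"
        by (simp only: power_minus[of "x + real k * z" i] power_add) (simp only: mult_ac)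
    qed
  qed
  have "(\<Sum>k\<le>n. real (n choose k) * (x + real k * z)^k * (u - (x + real k * z))^(n-k))
      = (\<Sum>k\<le>n. \<Sum>i\<le>n-k. G k i)" by (simp add: 1)
  also have "\<dots> = (\<Sum>(k,i)\<in>{(k,i). k+i \<le> n}. G k i)"
    by (simp add: pairs_le_eq_Sigma sum.Sigma)
  also have "\<dots> = (\<Sum>m\<le>n. \<Sum>k\<le>m. G k (m-k))"
    by (rule sum.triangle_reindex_eq)
  also have "\<dots> = (\<Sum>m\<le>n. real (n choose m) * u^(n-m) * (-1)^m *
                    (\<Sum>k\<le>m. real (m choose k) * (-1)^k * (x + real k * z)^m))"
  proof (intro sum.cong refl)
    fix m assume m: "m \<in> {..n}"
    show "(\<Sum>k\<le>m. G k (m-k)) = real (n choose m) * u^(n-m) * (-1)^m *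
                    (\<Sum>k\<le>m. real (m choose k) * (-1)^k * (x + real k * z)^m)"
      unfolding sum_distrib_left
    proof (intro sum.cong refl)
      fix k assume k: "k \<in> {..m}"
      have c: "real (n choose m) * real (m choose k) = real (n choose k) * real ((n-k) choose (m-k))"
        using choose_mult[of k m n] k m by (simp flip: of_nat_mult)
      have e1: "k + (m - k) = m" and e2: "n - k - (m - k) = n - m" using k m by auto
      show "G k (m-k) = real (n choose m) * u^(n-m) * (-1)^m *
                    (real (m choose k) * (-1)^k * (x + real k * z)^m)"
        unfolding G_def e1 e2 using c neg1_diff[of k m] k
        by (simp add: algebra_simps; metis (no_types, lifting) mult.assoc mult.left_commute)
    qed
  qed
  also have "\<dots> = (\<Sum>m\<le>n. real (n choose m) * fact m * z^m * u^(n-m))"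
  proof (intro sum.cong refl)
    fix m assume "m \<in> {..n}"
    have h: "(\<Sum>k\<le>m. real (m choose k) * (-1)^k * (x + real k * z)^m) = (-1)^m * fact m * z^m"
      using fd_pow[of m m x z] by simp
    have h2: "(-1::real)^m * (-1)^m = 1" by (simp flip: power_add)
    show "real (n choose m) * u^(n-m) * (-1)^m * (\<Sum>k\<le>m. real (m choose k) * (-1)^k * (x + real k * z)^m)
        = real (n choose m) * fact m * z^m * u^(n-m)"
      unfolding h using h2 by (simp add: mult_ac)
  qed
  finally show ?thesis .
qed

lemma geo_bound:
  fixes s :: real
  assumes "n > 0" "0 \<le> s" "s < 1"
  shows "(\<Sum>m\<le>n. real (n choose m) * fact m * (s / real n)^m * 1^(n-m)) \<le> 1 / (1 - s)"
proof -
  have "(\<Sum>m\<le>n. real (n choose m) * fact m * (s / real n)^m * 1^(n-m)) \<le> (\<Sum>m\<le>n. s^m)"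
  proof (intro sum_mono)
    fix m assume "m \<in> {..n}"
    have "real (n choose m) * fact m \<le> real n ^ m"
      using binomial_fact_pow[of n m] by (metis of_nat_fact of_nat_le_iff of_nat_mult of_nat_power)
    then have "real (n choose m) * fact m * (s / real n)^m \<le> real n ^ m * (s / real n)^m"
      using assms by (intro mult_right_mono) auto
    also have "\<dots> = s^m" using assms by (simp add: power_divide)
    finally show "real (n choose m) * fact m * (s / real n)^m * 1^(n-m) \<le> s^m" by simp
  qed
  also have "(\<Sum>m\<le>n. s^m) = (1 - s^(Suc n)) / (1 - s)"
  proof -
    have "s \<noteq> 1" using assms by simp
    then show ?thesis by (simp only: lessThan_Suc_atMost[symmetric] sum_gp_strict if_False)
  qed
  also have "\<dots> \<le> 1 / (1 - s)"
    using assms by (intro divide_right_mono) auto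
  finally show ?thesis .
qed

lemma amgm:
  fixes a b s :: real
  assumes "0 \<le> a" "0 < b" "0 \<le> s" "s \<le> 1"
  shows "a * exp (s * ln (b / a)) \<le> (1 - s) * a + s * b"
proof (cases "a = 0")
  case True then show ?thesis using assms by simp
next
  case False
  then have a: "a > 0" using assms by simp
  have "(1 - s) * ln a + s * ln b = ln a + s * ln (b / a)"
    using a assms by (simp add: ln_div algebra_simps)
  then have "exp ((1 - s) * ln a + s * ln b) = exp (ln a) * exp (s * ln (b / a))"
    by (simp only: exp_add)
  then have "a * exp (s * ln (b / a)) = exp ((1 - s) * ln a + s * ln b)"
    using a by simp
  also have "\<dots> \<le> (1 - s) * exp (ln a) + s * exp (ln b)"
    using convex_onD[OF exp_convex, of s "ln a" "ln b"] assms by simp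
  also have "\<dots> = (1 - s) * a + s * b" using a assms by simp
  finally show ?thesis .
qed

lemma pointwise:
  fixes n k :: nat and t p :: real
  assumes n: "n > 0" and t: "0 \<le> t" "t < real n" and p: "0 \<le> p" "p \<le> 1" and k: "k \<le> n"
  shows "real (n choose k) * p^k * (1-p)^(n-k) * exp (t * kl_bern (real k / real n) p)
     \<le> real (n choose k) * ((1 - t / real n) * p + real k * (t / real n / real n))^k
          * (1 - ((1 - t / real n) * p + real k * (t / real n / real n)))^(n-k)"
proof -
  define s where "s = t / real n"
  define q where "q = real k / real n"
  have s: "0 \<le> s" "s < 1" using n t by (auto simp: s_def)
  have q: "0 \<le> q" "q \<le> 1" using n k by (auto simp: q_def)
  have xe: "(1 - t / real n) * p + real k * (t / real n / real n) = (1 - s) * p + s * q"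
    by (simp add: s_def q_def)
  have xe2: "1 - ((1 - s) * p + s * q) = (1 - s) * (1 - p) + s * (1 - q)"
    by (simp add: algebra_simps)
  define E1 where "E1 = exp (s * ln (q / p))"
  define E2 where "E2 = exp (s * ln ((1 - q) / (1 - p)))"
  have h1: "t * xlogxy q p = real k * (s * ln (q / p))"
  proof (cases "k = 0")
    case True then show ?thesis by (simp add: q_def xlogxy_def)
  next
    case False
    then have "q \<noteq> 0" using n by (simp add: q_def)
    then show ?thesis using n by (simp add: xlogxy_def q_def s_def)
  qed
  have h2: "t * xlogxy (1 - q) (1 - p) = real (n - k) * (s * ln ((1 - q) / (1 - p)))"
  proof (cases "k = n")
    case True then show ?thesis using n by (simp add: q_def xlogxy_def)
  next
    case False
    then have "1 - q \<noteq> 0" using n by (simp add: q_def)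
    moreover have "t * (1 - q) = real (n - k) * s" using n k by (simp add: q_def s_def of_nat_diff field_simps)
    ultimately show ?thesis by (simp add: xlogxy_def)
  qed
  have ex: "exp (t * kl_bern q p) = E1 ^ k * E2 ^ (n - k)"
    unfolding kl_bern_def distrib_left h1 h2 exp_add E1_def E2_def
    by (simp add: exp_of_nat_mult)
  have b1: "(p * E1) ^ k \<le> ((1 - s) * p + s * q) ^ k"
  proof (cases "k = 0")
    case True then show ?thesis by simp
  next
    case False
    then have "q > 0" using n by (simp add: q_def)
    then have "p * E1 \<le> (1 - s) * p + s * q" unfolding E1_def using amgm[of p q s] p s by simp
    then show ?thesis by (intro power_mono) (use p in \<open>auto simp: E1_def\<close>)
  qed
  have b2: "((1 - p) * E2) ^ (n - k) \<le> ((1 - s) * (1 - p) + s * (1 - q)) ^ (n - k)"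
  proof (cases "k = n")
    case True then show ?thesis by simp
  next
    case False
    then have "1 - q > 0" using n k by (simp add: q_def)
    then have "(1 - p) * E2 \<le> (1 - s) * (1 - p) + s * (1 - q)" unfolding E2_def using amgm[of "1 - p" "1 - q" s] p s by simp
    then show ?thesis by (intro power_mono) (use p in \<open>auto simp: E2_def\<close>)
  qed
  have "real (n choose k) * p^k * (1-p)^(n-k) * exp (t * kl_bern q p)
       = real (n choose k) * ((p * E1) ^ k * ((1 - p) * E2) ^ (n - k))"
    by (simp add: ex power_mult_distrib)
  also have "\<dots> \<le> real (n choose k) * (((1 - s) * p + s * q) ^ k * ((1 - s) * (1 - p) + s * (1 - q)) ^ (n - k))"
  proof -
    have x0: "0 \<le> (1 - s) * p + s * q" using s q p by simp
    show ?thesis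
      using b1 b2 p x0 by (intro mult_left_mono mult_mono) (auto simp: E1_def E2_def)
  qed
  finally have F: "real (n choose k) * p^k * (1-p)^(n-k) * exp (t * kl_bern q p)
     \<le> real (n choose k) * (((1 - s) * p + s * q) ^ k * (1 - ((1 - s) * p + s * q)) ^ (n - k))"
    by (simp only: xe2)
  show ?thesis using F unfolding xe q_def by (simp add: mult.assoc)
qed

theorem proposition2p5:
  fixes n :: nat and t p :: real
  assumes "n > 0" and "0 \<le> t" and "t < real n" and "0 \<le> p" and "p \<le> 1"
  shows "measure_pmf.expectation (binomial_pmf n p)
           (\<lambda>B. exp (t * kl_bern (real B / real n) p)) \<le> 1 / (1 - t / real n)"
proof -
  define s where "s = t / real n"
  have s: "0 \<le> s" "s < 1" using assms by (auto simp: s_def)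
  have "measure_pmf.expectation (binomial_pmf n p) (\<lambda>B. exp (t * kl_bern (real B / real n) p))
      = (\<Sum>k\<le>n. real (n choose k) * p^k * (1-p)^(n-k) * exp (t * kl_bern (real k / real n) p))"
    using assms by (simp add: expectation_binomial_pmf')
  also have "\<dots> \<le> (\<Sum>k\<le>n. real (n choose k) * ((1 - t / real n) * p + real k * (t / real n / real n))^k
          * (1 - ((1 - t / real n) * p + real k * (t / real n / real n)))^(n-k))"
    using assms by (intro sum_mono pointwise) auto
  also have "\<dots> = (\<Sum>m\<le>n. real (n choose m) * fact m * (s / real n)^m * 1^(n-m))"
    unfolding s_def by (rule abel_sum)
  also have "\<dots> \<le> 1 / (1 - s)"
    using assms s by (intro geo_bound) auto
  finally show ?thesis by (simp add: s_def)
qed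

end
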